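(* Let $n\ge 1$ be an integer, let $0<\epsilon_\text{B}\le 1/2$ and $0<\delta\le 1/2$, and let $K_\text{B}=P_\text{A}G_\text{B}L_\text{B}>0$ and $K_\text{E}=P_\text{A}G_\text{E}L_\text{E}>0$ be constants. Let $|h_\text{B}|$ and $|h_\text{E}|$ be random variables, each with a shadowed Rician distribution: for $i\in\{\text{B},\text{E}\}$, with parameters $b_i>0$, $m_i>0$, $\Omega_i\ge 0$, the density of $|h_i|$ is $$f_{|h_i|}(x)=\left(\frac{2b_im_i}{2b_im_i+\Omega_i}\right)^{m_i}\frac{x}{2b_i}\exp\!\left(-\frac{x^2}{2b_i}\right){}_1F_1\!\left(m_i,1,\frac{\Omega_i x^2}{2b_i(2b_im_i+\Omega_i)}\right),\quad x\ge 0.$$ Set $\text{SNR}_i=K_i|h_i|^2$, $$V_i=\frac{1}{(\ln 2)^2}\cdot\frac{\text{SNR}_i^2+2\,\text{SNR}_i}{(1+\text{SNR}_i)^2},$$ and define the finite-blocklength secrecy rate $$R_s=\Big[\log_2(1+\text{SNR}_\text{B})-\log_2(1+\text{SNR}_\text{E})\Big]^+-\sqrt{\frac{V_\text{B}}{n}}\,Q^{-1}(\epsilon_\text{B})-\sqrt{\frac{V_\text{E}}{n}}\,Q^{-1}(\delta),$$ where $[x]^+=\max(0,x)$ and $Q^{-1}$ is the inverse of $Q(x)=\frac{1}{\sqrt{2\pi}}\int_x^\infty e^{-\nu^2/2}\,d\nu$. For $i\in\{\text{B},\text{E}\}$ let $\phi_i(\omega)=\mathbb{E}[|h_i|^\omega]$,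 so that $$\phi_i(\omega)=\left(\frac{2b_im_i}{2b_im_i+\Omega_i}\right)^{m_i}(2b_i)^{\omega/2}\,\Gamma\!\left(\frac{\omega}{2}+1\right){}_2F_1\!\left(\frac{\omega}{2}+1,m_i,1,\frac{\Omega_i}{2b_im_i+\Omega_i}\right),$$ let $\phi_\text{B}'(0)=\frac{d}{d\omega}\phi_\text{B}(\omega)\big|_{\omega=0}$ (so $2\phi'_\text{B}(0)=\mathbb{E}[\ln|h_\text{B}|^2]$), and let $\overline{\text{SNR}}_\text{B}=\mathbb{E}[\text{SNR}_\text{B}]=K_\text{B}\phi_\text{B}(2)$ and $\overline{\text{SNR}}_\text{E}=\mathbb{E}[\text{SNR}_\text{E}]=K_\text{E}\phi_\text{E}(2)$. Then $\mathbb{E}[R_s]\ge\tilde R$, where $$\tilde R=\log_2\!\Big(1+K_\text{B}\exp\big(2\phi'_\text{B}(0)\big)\Big)-\log_2\!\big(1+\overline{\text{SNR}}_\text{E}\big)-\frac{Q^{-1}(\epsilon_\text{B})}{\ln 2\,\sqrt n}\sqrt{1-\frac{1}{(1+\overline{\text{SNR}}_\text{B})^2}}-\frac{Q^{-1}(\delta)}{\ln 2\,\sqrt n}\sqrt{1-\frac{1}{(1+\overline{\text{SNR}}_\text{E})^2}}.$$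
   Context: ${}_1F_1$ is the confluent hypergeometric function, ${}_2F_1$ the Gauss hypergeometric function, $\Gamma$ the gamma function. Physically, $K_i$ collects the ground-station transmit power normalized by noise power and transmit antenna gain ($P_\text{A}$), the receive-direction antenna gain $G_i$ and the free-space path loss $L_i$ toward satellite $i$ (B = legitimate receiver Bob, E = eavesdropper Eve); $\epsilon_\text{B}$ is the target error probability at Bob, $\delta$ the secrecy (information-leakage) constraint, and $n$ the blocklength. Expectations are over the channel distributions. *)

theory Defs
  imports "HOL-Probability.Probability"
begin

definition hyp1F1 :: "real \<Rightarrow> real \<Rightarrow> real \<Rightarrow> real" where
  "hyp1F1 a b z = (\<Sum>k. pochhammer a k / pochhammer b k * z ^ k / fact k)"

definition sr_pdf :: "real \<Rightarrow> real \<Rightarrow> real \<Rightarrow> real \<Rightarrow> real" where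
  "sr_pdf b m \<Omega> x =
     (if 0 \<le> x then
        (2*b*m / (2*b*m + \<Omega>)) powr m * (x / b) * exp (-(x^2) / (2*b))
        * hyp1F1 m 1 (\<Omega> * x^2 / (2*b*(2*b*m + \<Omega>)))
      else 0)"

definition Qfun :: "real \<Rightarrow> real" where
  "Qfun x = (LBINT v:{x..}. exp (-(v^2) / 2)) / sqrt (2*pi)"

definition Qinv :: "real \<Rightarrow> real" where
  "Qinv e = (THE x. Qfun x = e)"

definition dispersion :: "real \<Rightarrow> real" where
  "dispersion x = (1 / (ln 2)^2) * ((x^2 + 2*x) / (1 + x)^2)"

end

theory Submission
  imports Defs
begin

abbreviation "NN \<equiv> density lborel std_normal_density"

lemma NN_rd: "real_distribution NN"
  unfolding real_distribution_def real_distribution_axioms_def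
  using prob_space_normal_density by auto

lemma NN_measure: "A \<in> sets borel \<Longrightarrow> measure NN A = (\<integral>v. std_normal_density v * indicator A v \<partial>lborel)"
proof -
  assume A: "A \<in> sets borel"
  interpret real_distribution NN by (rule NN_rd)
  have "measure NN A = integral\<^sup>L NN (indicator A)"
    using A by (simp add: integral_indicator)  
  also have "\<dots> = (\<integral>v. std_normal_density v * indicator A v \<partial>lborel)"
    using A by (subst integral_density) auto
  finally show ?thesis .
qed

lemma Qfun_eq: "Qfun x = measure NN {x..}"
proof -
  have "measure NN {x..} = (\<integral>v. std_normal_density v * indicator {x..} v \<partial>lborel)"
    by (rule NN_measure) auto
  also have "\<dots> = (\<integral>v. indicator {x..} v * exp (-(v^2)/2) \<partial>lborel) / sqrt (2*pi)"
    by (simp add: std_normal_density_def mult_ac)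
  finally show ?thesis unfolding Qfun_def set_lebesgue_integral_def by simp
qed

lemma NN_single: "measure NN {x} = 0"
proof -
  have "emeasure NN {x} = (\<integral>\<^sup>+ v. std_normal_density v * indicator {x} v \<partial>lborel)"
    by (subst emeasure_density) auto
  also have "\<dots> = (\<integral>\<^sup>+ v. 0 \<partial>(lborel::real measure))"
  proof (rule nn_integral_cong_AE)
    show "AE v in lborel. ennreal (std_normal_density v * indicator {x} v) = 0"
      using AE_lborel_singleton[of x] by eventually_elim auto
  qed
  finally show ?thesis by (simp add: measure_def)
qed

lemma Qfun_cdf: "Qfun x = 1 - cdf NN x"
proof -
  interpret real_distribution NN by (rule NN_rd)
  have "measure NN {x..} = 1 - measure NN {..<x}"
    using prob_compl[of "{..<x}"] by (simp add: Compl_eq_Diff_UNIV[symmetric] Compl_lessThan)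
  moreover have "measure NN {..x} = measure NN {..<x} + measure NN {x}"
  proof -
    have "{..x} = {..<x} \<union> {x}" by auto
    then show ?thesis using finite_measure_Union[of "{..<x}" "{x}"] by simp
  qed
  ultimately show ?thesis using NN_single[of x] by (simp add: Qfun_eq cdf_def)
qed

lemma cdf_NN_cont: "isCont (cdf NN) x"
proof -
  interpret real_distribution NN by (rule NN_rd)
  have "measure NN {..x} = measure NN {..<x} + measure NN {x}"
  proof -
    have "{..x} = {..<x} \<union> {x}" by auto
    then show ?thesis using finite_measure_Union[of "{..<x}" "{x}"] by simp
  qed
  then have eq: "measure NN {..<x} = cdf NN x" using NN_single[of x] by (simp add: cdf_def)
  have "continuous (at_left x) (cdf NN)"
    unfolding continuous_within using cdf_at_left[of x] eq by simp
  moreover have "continuous (at_right x) (cdf NN)" by (rule cdf_is_right_cont)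
  ultimately show ?thesis using continuous_at_split by blast
qed

lemma Qfun_cont: "continuous_on S Qfun"
proof -
  have "continuous_on S (\<lambda>x. 1 - cdf NN x)"
    by (intro continuous_at_imp_continuous_on ballI continuous_intros cdf_NN_cont)
  then show ?thesis by (simp add: Qfun_cdf[abs_def])
qed

lemma NN_Ioc_pos:
  assumes "x < y" shows "measure NN {x<..y} > 0"
proof -
  define c where "c = (1 / sqrt (2 * pi)) * exp (- (max (x^2) (y^2)) / 2)"
  have c: "c > 0" unfolding c_def by simp
  have le: "c * indicator {x<..y} v \<le> std_normal_density v * indicator {x<..y} v" for v
  proof (cases "v \<in> {x<..y}")
    case True
    have "v^2 \<le> max (x^2) (y^2)"
    proof (cases "v \<ge> 0")
      case True
      then have "v^2 \<le> y^2" using \<open>v \<in> {x<..y}\<close> by (intro power_mono) auto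
      then show ?thesis by simp
    next
      case False
      then have "(-v)^2 \<le> (-x)^2" using \<open>v \<in> {x<..y}\<close> by (intro power_mono) auto
      then show ?thesis by simp
    qed
    then have "exp (- (max (x^2) (y^2)) / 2) \<le> exp (- (v^2) / 2)" by simp
    then show ?thesis using True by (simp add: c_def std_normal_density_def divide_right_mono)
  qed simp
  have "c * (y - x) = (\<integral>v. c * indicator {x<..y} v \<partial>lborel)"
    using assms by simp
  also have "\<dots> \<le> (\<integral>v. std_normal_density v * indicator {x<..y} v \<partial>lborel)"
  proof (rule integral_mono)
    show "integrable lborel (\<lambda>v. c * indicator {x<..y} v)"
      by (intro integrable_mult_right integrable_real_indicator) (use assms in \<open>auto simp: emeasure_lborel_Ioc\<close>)
  qed (use le in \<open>auto intro: integrable_real_mult_indicator\<close>)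
  also have "\<dots> = measure NN {x<..y}" by (rule NN_measure[symmetric]) auto
  finally show ?thesis using c assms by (smt (verit) mult_pos_pos)
qed

lemma Qfun_strict: "x < y \<Longrightarrow> Qfun y < Qfun x"
proof -
  assume xy: "x < y"
  interpret real_distribution NN by (rule NN_rd)
  show ?thesis using cdf_diff_eq[OF xy] NN_Ioc_pos[OF xy] by (simp add: Qfun_cdf)
qed

lemma Qfun_top: "(Qfun \<longlongrightarrow> 0) at_top"
proof -
  interpret real_distribution NN by (rule NN_rd)
  have "((\<lambda>x. 1 - cdf NN x) \<longlongrightarrow> 1 - 1) at_top"
    by (intro tendsto_intros cdf_lim_at_top_prob)
  then show ?thesis by (simp add: Qfun_cdf[abs_def])
qed

lemma Qfun_0: "Qfun 0 = 1/2"
proof -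
  have eq: "std_normal_density (0 + sqrt 2 * v) * indicator {0..} (0 + sqrt 2 * v) =
      (1 / sqrt (2*pi)) * (indicator {0..} v * exp (- (v^2)))" for v :: real
    by (auto simp: std_normal_density_def power_mult_distrib indicator_def zero_le_mult_iff)
  have g: "(\<integral>v. indicator {0..} v * exp (- (v^2)) \<partial>lborel) = sqrt pi / 2"
    using has_bochner_integral_integral_eq[OF gaussian_moment_0] by simp
  have "Qfun 0 = (\<integral>v. std_normal_density v * indicator {0..} v \<partial>lborel)"
    unfolding Qfun_eq by (rule NN_measure) auto
  also have "\<dots> = sqrt 2 * (\<integral>v. std_normal_density (0 + sqrt 2 * v) * indicator {0..} (0 + sqrt 2 * v) \<partial>lborel)"
    by (subst lborel_integral_real_affine[where c="sqrt 2" and t=0]) auto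
  also have "\<dots> = sqrt 2 * ((1 / sqrt (2*pi)) * (sqrt pi / 2))"
    unfolding eq g[symmetric] by simp
  also have "\<dots> = 1/2"
    by (simp add: real_sqrt_mult field_simps)
  finally show ?thesis .
qed

lemma Qinv_nonneg:
  assumes "0 < e" "e \<le> 1/2" shows "Qinv e \<ge> 0"
proof -
  from Qfun_top assms(1) have "eventually (\<lambda>x. Qfun x < e) at_top"
    by (simp add: order_tendsto_iff)
  then obtain b0 where b0: "\<And>x. x \<ge> b0 \<Longrightarrow> Qfun x < e" by (auto simp: eventually_at_top_linorder)
  define b where "b = max 0 b0"
  have "Qfun b \<le> e" using b0[of b] by (simp add: b_def)
  then obtain x where x: "0 \<le> x" "x \<le> b" "Qfun x = e"
    using IVT2'[of Qfun b e 0] Qfun_cont[of "{0..b}"] assms Qfun_0 by (auto simp: b_def)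
  have "Qinv e = x"
    unfolding Qinv_def
  proof (rule the_equality)
    fix y assume "Qfun y = e"
    show "y = x"
    proof (rule ccontr)
      assume "y \<noteq> x"
      then have "y < x \<or> x < y" by linarith
      then show False using Qfun_strict[of x y] Qfun_strict[of y x] x \<open>Qfun y = e\<close> by linarith
    qed
  qed (rule x(3))
  then show ?thesis using x by simp
qed

lemma hyp_bound:
  assumes m: "m > 0" and beta: "\<beta> > 1"
  obtains D where "D > 0" "\<And>z. z \<ge> 0 \<Longrightarrow> 0 \<le> hyp1F1 m 1 z \<and> hyp1F1 m 1 z \<le> D * exp (\<beta> * z)"
proof -
  define a where "a k = pochhammer m k / fact k" for k
  have apos: "a k \<ge> 0" for k unfolding a_def using m by (simp add: pochhammer_pos less_imp_le)
  have "\<bar>-1/\<beta>\<bar> < 1" using beta by simp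
  from gen_binomial_real[OF this, of "-m"]
  have "summable (\<lambda>k. ((-m) gchoose k) * (-1/\<beta>)^k)" by (rule sums_summable)
  also have "(\<lambda>k. ((-m) gchoose k) * (-1/\<beta>)^k) = (\<lambda>k. a k * (1/\<beta>)^k)"
  proof
    fix k
    have "((-m) gchoose k) * (-1/\<beta>)^k = ((-1)^k * (-1/\<beta>)^k) * a k"
      by (simp add: gbinomial_pochhammer a_def)
    also have "(-1)^k * (-1/\<beta>)^k = ((-1) * (-1/\<beta>))^k" by (rule power_mult_distrib[symmetric])
    finally show "((-m) gchoose k) * (-1/\<beta>)^k = a k * (1/\<beta>)^k" by simp
  qed
  finally have "summable (\<lambda>k. a k * (1/\<beta>)^k)" .
  then have "Bseq (\<lambda>k. a k * (1/\<beta>)^k)"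
    by (intro convergent_imp_Bseq) (auto dest: summable_LIMSEQ_zero intro: convergentI)
  then obtain D where D: "D > 0" "\<And>k. norm (a k * (1/\<beta>)^k) \<le> D" by (auto elim: BseqE)
  have aD: "a k \<le> D * \<beta>^k" for k
  proof -
    have "a k * (1/\<beta>)^k \<le> D" using D(2)[of k] apos[of k] beta by simp
    then have "a k * (1/\<beta>)^k * \<beta>^k \<le> D * \<beta>^k" using beta by (intro mult_right_mono) auto
    moreover have "(1/\<beta>)^k * \<beta>^k = 1" using beta by (simp add: power_one_over field_simps)
    ultimately show ?thesis by (simp add: mult.assoc)
  qed
  show ?thesis
  proof (rule that[OF D(1)])
    fix z :: real assume z: "z \<ge> 0"
    define t where "t k = pochhammer m k / pochhammer 1 k * z ^ k / fact k" for k
    define u where "u k = D * ((\<beta> * z) ^ k / fact k)" for k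
    have teq: "t k = a k * z^k / fact k" for k by (simp add: t_def a_def pochhammer_fact[symmetric])
    have tnn: "t k \<ge> 0" for k unfolding teq using apos z by simp
    have tu: "t k \<le> u k" for k
    proof -
      have "t k = a k * z^k / fact k" by (rule teq)
      also have "\<dots> \<le> (D * \<beta>^k) * z^k / fact k"
        using aD[of k] z by (intro divide_right_mono mult_right_mono) auto
      also have "\<dots> = u k" by (simp add: u_def power_mult_distrib)
      finally show ?thesis .
    qed
    have us: "u sums (D * exp (\<beta> * z))"
      unfolding u_def using exp_converges[of "\<beta> * z"] by (intro sums_mult) (simp add: divide_inverse mult.commute)
    have ts: "summable t"
      by (rule summable_comparison_test[OF _ sums_summable[OF us]]) (use tnn tu in auto)
    have "hyp1F1 m 1 z = suminf t" unfolding hyp1F1_def t_def ..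
    moreover have "suminf t \<le> suminf u" by (rule suminf_le[OF tu ts sums_summable[OF us]])
    moreover have "suminf t \<ge> 0" by (rule suminf_nonneg[OF ts tnn])
    ultimately show "0 \<le> hyp1F1 m 1 z \<and> hyp1F1 m 1 z \<le> D * exp (\<beta> * z)" using sums_unique[OF us] by simp
  qed
qed

lemma pdf_bound:
  assumes b: "b > 0" and m: "m > 0" and Om: "\<Omega> \<ge> 0"
  obtains C \<alpha> where "C > 0" "\<alpha> > 0" "\<And>x. 0 \<le> sr_pdf b m \<Omega> x" "\<And>x. x \<le> 0 \<Longrightarrow> sr_pdf b m \<Omega> x = 0"
    "\<And>x. x \<ge> 0 \<Longrightarrow> sr_pdf b m \<Omega> x \<le> C * x * exp (- \<alpha> * x^2)"
proof -
  define q where "q = \<Omega> / (2*b*m + \<Omega>)"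
  have bm: "2*b*m > 0" using b m by simp
  have q0: "0 \<le> q" and q1: "q < 1" using bm Om by (auto simp: q_def field_simps)
  define \<beta> where "\<beta> = 2 / (1 + q)"
  have beta: "\<beta> > 1" using q0 q1 by (simp add: \<beta>_def field_simps)
  have bq: "\<beta> * q < 1" using q0 q1 by (simp add: \<beta>_def field_simps)
  obtain D where D: "D > 0" "\<And>z. z \<ge> 0 \<Longrightarrow> 0 \<le> hyp1F1 m 1 z \<and> hyp1F1 m 1 z \<le> D * exp (\<beta> * z)"
    using hyp_bound[OF m beta] by blast
  define A where "A = (2*b*m / (2*b*m + \<Omega>)) powr m"
  have "2*b*m + \<Omega> > 0" using bm Om by simp
  then have "2*b*m / (2*b*m + \<Omega>) > 0" using bm by (intro divide_pos_pos)
  then have A: "A > 0" unfolding A_def by (rule powr_gt_zero[THEN iffD2, OF less_imp_neq[symmetric]])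
  define \<alpha> where "\<alpha> = (1 - \<beta> * q) / (2*b)"
  have alpha: "\<alpha> > 0" using bq b by (simp add: \<alpha>_def)
  have nn: "0 \<le> sr_pdf b m \<Omega> x" for x
  proof (cases "x \<ge> 0")
    case True
    have "\<Omega> * x^2 / (2*b*(2*b*m + \<Omega>)) \<ge> 0" using Om b bm by simp
    then show ?thesis using True D(2) b by (simp add: sr_pdf_def)
  qed (simp add: sr_pdf_def)
  have z0: "x \<le> 0 \<Longrightarrow> sr_pdf b m \<Omega> x = 0" for x by (cases "x = 0") (auto simp: sr_pdf_def)
  have bd: "sr_pdf b m \<Omega> x \<le> (A * D / b) * x * exp (- \<alpha> * x^2)" if x: "x \<ge> 0" for x
  proof -
    define z where "z = \<Omega> * x^2 / (2*b*(2*b*m + \<Omega>))"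
    have z: "z \<ge> 0" "z = q * x^2 / (2*b)" using Om b bm by (simp_all add: z_def q_def field_simps)
    have "sr_pdf b m \<Omega> x = A * (x / b) * exp (-(x^2) / (2*b)) * hyp1F1 m 1 z"
      using x by (simp add: sr_pdf_def A_def z_def)
    also have "\<dots> \<le> A * (x / b) * exp (-(x^2) / (2*b)) * (D * exp (\<beta> * z))"
      using D(2)[OF z(1)] A x b by (intro mult_left_mono) auto
    also have "\<dots> = (A * D / b) * x * (exp (-(x^2) / (2*b)) * exp (\<beta> * z))" by simp
    also have "exp (-(x^2) / (2*b)) * exp (\<beta> * z) = exp (- \<alpha> * x^2)"
      unfolding exp_add[symmetric] z(2) \<alpha>_def using b by (simp add: field_simps)
    finally show ?thesis .
  qed
  show ?thesis by (rule that[of "A * D / b" \<alpha>]) (use A D b alpha nn z0 bd in auto)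
qed

definition good :: "'a measure \<Rightarrow> ('a \<Rightarrow> real) \<Rightarrow> bool" where
  "good M h \<longleftrightarrow> prob_space M \<and> (\<exists>p C \<alpha>. distributed M lborel h (\<lambda>x. ennreal (p x)) \<and>
     (\<forall>x. 0 \<le> p x) \<and> (\<forall>x\<le>0. p x = 0) \<and> (\<forall>x\<ge>0. p x \<le> C * x * exp (- \<alpha> * x^2)) \<and> C > 0 \<and> \<alpha> > 0)"

lemma sr_good:
  assumes "prob_space M" "b > 0" "m > 0" "\<Omega> \<ge> 0"
    "distributed M lborel h (\<lambda>x. ennreal (sr_pdf b m \<Omega> x))"
  shows "good M h"
proof -
  obtain C \<alpha> where "C > 0" "\<alpha> > 0" "\<And>x. 0 \<le> sr_pdf b m \<Omega> x" "\<And>x. x \<le> 0 \<Longrightarrow> sr_pdf b m \<Omega> x = 0"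
    "\<And>x. x \<ge> 0 \<Longrightarrow> sr_pdf b m \<Omega> x \<le> C * x * exp (- \<alpha> * x^2)"
    using pdf_bound[OF assms(2-4)] by blast
  then show ?thesis unfolding good_def using assms(1,5) by blast
qed

lemma gauss_int:
  fixes \<alpha> :: real
  assumes a: "\<alpha> > 0"
  shows "integrable lborel (\<lambda>x. exp (- \<alpha> * x^2) * (1 + x^4))"
proof -
  define \<sigma> where "\<sigma> = sqrt (1 / (2*\<alpha>))"
  have s: "\<sigma> > 0" "\<sigma>^2 = 1/(2*\<alpha>)" using a by (simp_all add: \<sigma>_def)
  define c where "c = sqrt (2 * pi * \<sigma>^2)"
  have eq: "exp (- \<alpha> * x^2) * (1 + x^4) = c * (normal_density 0 \<sigma> x + normal_density 0 \<sigma> x * (x - 0)^4)" for x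
  proof -
    have e: "(x - 0)^2 / (2 * \<sigma>^2) = \<alpha> * x^2" unfolding s(2) using a by (simp add: field_simps)
    have c: "c > 0" using s a by (simp add: c_def)
    have "normal_density 0 \<sigma> x = exp (- \<alpha> * x^2) / c"
      unfolding normal_density_def c_def[symmetric] using e by (simp add: minus_divide_left)
    then show ?thesis using c by (simp add: field_simps)
  qed
  have "integrable lborel (\<lambda>x. c * (normal_density 0 \<sigma> x + normal_density 0 \<sigma> x * (x - 0)^4))"
    using Bochner_Integration.integrable_add[OF integrable_normal_density[OF s(1)] integrable_normal_moment[OF s(1)], of 0 0 4]
    by (intro integrable_mult_right) simp
  then show ?thesis unfolding eq .
qed

lemma good_meas: "good M h \<Longrightarrow> h \<in> borel_measurable M"
  unfolding good_def by (auto dest: distributed_measurable)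

lemma good_int:
  assumes gd: "good M h" and g: "g \<in> borel_measurable borel" and K: "K \<ge> 0"
    and gb: "\<And>x. x > 0 \<Longrightarrow> \<bar>g x\<bar> \<le> K * (1/x + x^3)"
  shows "integrable M (\<lambda>s. g (h s))"
proof -
  obtain p C \<alpha> where d: "distributed M lborel h (\<lambda>x. ennreal (p x))" and pnn: "\<And>x. 0 \<le> p x"
    and p0: "\<And>x. x \<le> 0 \<Longrightarrow> p x = 0" and pb: "\<And>x. x \<ge> 0 \<Longrightarrow> p x \<le> C * x * exp (- \<alpha> * x^2)"
    and C: "C > 0" and a: "\<alpha> > 0"
    using gd unfolding good_def by blast
  have pm: "p \<in> borel_measurable lborel" using distributed_real_measurable[OF _ d] pnn by blast
  have "integrable lborel (\<lambda>x. p x * g x)"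
  proof (rule Bochner_Integration.integrable_bound)
    show "integrable lborel (\<lambda>x. (C * K) * (exp (- \<alpha> * x^2) * (1 + x^4)))"
      by (intro integrable_mult_right gauss_int a)
    show "(\<lambda>x. p x * g x) \<in> borel_measurable lborel" using pm g by measurable
    show "AE x in lborel. norm (p x * g x) \<le> norm ((C * K) * (exp (- \<alpha> * x^2) * (1 + x^4)))"
    proof (rule AE_I2)
      fix x :: real
      show "norm (p x * g x) \<le> norm ((C * K) * (exp (- \<alpha> * x^2) * (1 + x^4)))"
      proof (cases "x > 0")
        case False then show ?thesis using p0[of x] by simp
      next
        case True
        have "norm (p x * g x) = p x * \<bar>g x\<bar>" using pnn[of x] by (simp add: abs_mult)
        also have "\<dots> \<le> (C * x * exp (- \<alpha> * x^2)) * (K * (1/x + x^3))"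
          using pb[of x] gb[OF True] pnn[of x] True by (intro mult_mono) auto
        also have "\<dots> = (C * K) * (exp (- \<alpha> * x^2) * (1 + x^4))"
          using True by (simp add: field_simps power_eq_if)
        also have "\<dots> \<le> norm ((C * K) * (exp (- \<alpha> * x^2) * (1 + x^4)))" by simp
        finally show ?thesis .
      qed
    qed
  qed
  then show ?thesis using distributed_integrable[OF d] g pnn by simp
qed

lemma good_pos:
  assumes gd: "good M h" shows "AE s in M. h s > 0"
proof -
  obtain p where d: "distributed M lborel h (\<lambda>x. ennreal (p x))"
    and p0: "\<And>x. x \<le> 0 \<Longrightarrow> p x = 0"
    using gd unfolding good_def by blast
  have hm: "h \<in> borel_measurable M" using d by (auto dest: distributed_measurable)
  have "emeasure M (h -` {..0} \<inter> space M) = (\<integral>\<^sup>+x. ennreal (p x) * indicator {..0} x \<partial>lborel)"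
    by (rule distributed_emeasure[OF d]) auto
  also have "\<dots> = (\<integral>\<^sup>+x. 0 \<partial>(lborel :: real measure))"
    by (rule nn_integral_cong) (auto simp: p0 indicator_def)
  finally have "emeasure M (h -` {..0} \<inter> space M) = 0" by simp
  moreover have "h -` {..0} \<inter> space M = {s \<in> space M. \<not> h s > 0}" by auto
  ultimately show ?thesis using hm by (subst AE_iff_measurable[where N="{s \<in> space M. \<not> h s > 0}"]) auto
qed

lemma bnd_sq: "x > 0 \<Longrightarrow> x^2 \<le> 1/x + x^3" for x :: real
proof (cases "x \<le> 1")
  case True
  assume x: "x > 0"
  have "x^2 \<le> 1" using True x by (simp add: power_le_one)
  moreover have "1 \<le> 1/x" using True x by simp
  moreover have "0 \<le> x^3" using x by simp
  ultimately show ?thesis by linarith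
next
  case False
  assume x: "x > 0"
  have "x^2 \<le> x^3" using False by (intro power_increasing) auto
  moreover have "0 \<le> 1/x" using x by simp
  ultimately show ?thesis by linarith
qed

lemma bnd_ln: "x > 0 \<Longrightarrow> \<bar>ln x\<bar> \<le> 1/x + x^3" for x :: real
proof (cases "x \<le> 1")
  case True
  assume x: "x > 0"
  have "ln (1/x) \<le> 1/x - 1" using x by (intro ln_le_minus_one) simp
  moreover have "ln (1/x) = - ln x" using x by (simp add: ln_div)
  moreover have "ln x \<le> 0" using True x by simp
  moreover have "0 \<le> x^3" using x by simp
  ultimately show ?thesis by linarith
next
  case False
  assume x: "x > 0"
  have "ln x \<le> x - 1" using x by (intro ln_le_minus_one) simp
  moreover have "x \<le> x^3" using False power_increasing[of 1 3 x] by simp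
  moreover have "0 \<le> 1/x" "0 \<le> ln x" using x False by simp_all
  ultimately show ?thesis by linarith
qed

lemma bnd_powr: "x > 0 \<Longrightarrow> \<bar>w\<bar> \<le> 1 \<Longrightarrow> \<bar>x powr w\<bar> \<le> 1/x + x^3" for x w :: real
proof (cases "x \<le> 1")
  case True
  assume x: "x > 0" and w: "\<bar>w\<bar> \<le> 1"
  have "x powr w \<le> x powr (-1)" using True x w by (intro powr_mono') auto
  moreover have "x powr (-1) = 1/x" using x by (simp add: powr_minus_divide)
  moreover have "0 \<le> x^3" using x by simp
  moreover have "\<bar>x powr w\<bar> = x powr w" by simp
  ultimately show ?thesis by linarith
next
  case False
  assume x: "x > 0" and w: "\<bar>w\<bar> \<le> 1"
  have "x powr w \<le> x powr 1" using False x w by (intro powr_mono) auto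
  moreover have "x \<le> x^3" using False power_increasing[of 1 3 x] by simp
  moreover have "0 \<le> 1/x" using x by simp
  moreover have "\<bar>x powr w\<bar> = x powr w" by simp
  moreover have "x powr 1 = x" using x by simp
  ultimately show ?thesis by linarith
qed

definition RR :: "real \<Rightarrow> real" where
  "RR x = (ln x)^2 * (x powr (1/4) + x powr (-1/4))"

lemma bnd_R: "x > 0 \<Longrightarrow> \<bar>RR x\<bar> \<le> 32 * (1/x + x^3)" for x :: real
proof (cases "x \<le> 1")
  case True
  assume x: "x > 0"
  define y where "y = 1/x"
  have y: "y \<ge> 1" "x = 1/y" using x True by (simp_all add: y_def)
  have ly: "ln x = - ln y" using y by (simp add: ln_div)
  have "ln (y powr (1/4)) \<le> y powr (1/4) - 1" using y by (intro ln_le_minus_one) simp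
  moreover have "ln (y powr (1/4)) = ln y / 4" using y by (simp add: ln_powr)
  moreover have "0 \<le> ln y" using y by simp
  ultimately have l1: "0 \<le> ln y" "ln y \<le> 4 * y powr (1/4)" by linarith+
  have sq: "(ln y)^2 \<le> 16 * y powr (1/2)"
  proof -
    have "(ln y)^2 \<le> (4 * y powr (1/4))^2" using l1 by (intro power_mono) auto
    also have "(4 * y powr (1/4))^2 = 16 * (y powr (1/4) * y powr (1/4))" by (simp add: power2_eq_square)
    also have "y powr (1/4) * y powr (1/4) = y powr (1/2)" by (simp add: powr_add[symmetric])
    finally show ?thesis .
  qed
  have "x \<le> 1" using True .
  then have "x \<le> y" using y by linarith
  then have p1: "x powr (1/4) \<le> y powr (1/4)"
    using x by (intro powr_mono2) auto
  have p2: "x powr (-1/4) = y powr (1/4)" using y by (simp add: powr_divide powr_minus_divide)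
  have "\<bar>RR x\<bar> = (ln y)^2 * (x powr (1/4) + x powr (-1/4))"
    unfolding RR_def ly using y by simp
  also have "\<dots> \<le> (16 * y powr (1/2)) * (2 * y powr (1/4))"
    using sq p1 p2 by (intro mult_mono) auto
  also have "\<dots> = 32 * (y powr (1/2) * y powr (1/4))" by simp
  also have "y powr (1/2) * y powr (1/4) = y powr (3/4)" by (simp add: powr_add[symmetric])
  also have "y powr (3/4) \<le> y powr 1" using y by (intro powr_mono) auto
  also have "y powr 1 \<le> 1/x + x^3" using y x by simp
  finally show ?thesis by simp
next
  case False
  assume x: "x > 0"
  have "ln x \<le> x - 1" using x by (intro ln_le_minus_one) simp
  moreover have "0 \<le> ln x" using False by simp
  ultimately have "(ln x)^2 \<le> x^2" by (intro power_mono) auto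
  moreover have "x powr (1/4) \<le> x powr 1" using False by (intro powr_mono) auto
  moreover have "x powr (-1/4) \<le> x powr 1" using False by (intro powr_mono) auto
  ultimately have "(ln x)^2 * (x powr (1/4) + x powr (-1/4)) \<le> x^2 * (x + x)" using x by (intro mult_mono add_mono) auto
  moreover have "\<bar>RR x\<bar> = (ln x)^2 * (x powr (1/4) + x powr (-1/4))" unfolding RR_def by simp
  ultimately have "\<bar>RR x\<bar> \<le> x^2 * (x + x)" by simp
  also have "\<dots> = 2 * x^3" by (simp add: power_eq_if)
  also have "\<dots> \<le> 32 * (1/x + x^3)" using x by simp
  finally show ?thesis .
qed

lemma taylor_powr:
  fixes x w :: real
  assumes x: "x > 0" and w: "\<bar>w\<bar> \<le> 1/4"
  shows "\<bar>x powr w - 1 - w * ln x\<bar> \<le> w^2 * RR x"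
proof -
  define y where "y = w * ln x"
  obtain t where t: "\<bar>t\<bar> \<le> \<bar>y\<bar>" "exp y = (\<Sum>m<2. y ^ m / fact m) + exp t / fact 2 * y ^ 2"
    using Maclaurin_exp_le[of y 2] by blast
  have s2: "(\<Sum>m<2. y ^ m / fact m) = 1 + y"
    by (simp add: lessThan_Suc numeral_2_eq_2)
  have e: "exp y = 1 + y + exp t / 2 * y^2" using t(2) unfolding s2 by simp
  have xp: "x powr w = exp y" using x unfolding powr_def y_def by (simp add: mult.commute)
  have "exp t \<le> exp \<bar>y\<bar>" using t(1) by simp
  also have "\<bar>y\<bar> \<le> \<bar>ln x\<bar> / 4"
  proof -
    have "\<bar>y\<bar> = \<bar>w\<bar> * \<bar>ln x\<bar>" unfolding y_def by (rule abs_mult)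
    also have "\<dots> \<le> (1/4) * \<bar>ln x\<bar>" by (rule mult_right_mono[OF w abs_ge_zero])
    finally show ?thesis by simp
  qed
  also have "exp (\<bar>ln x\<bar> / 4) \<le> x powr (1/4) + x powr (-1/4)"
  proof (cases "ln x \<ge> 0")
    case True
    then have "exp (\<bar>ln x\<bar> / 4) = x powr (1/4)" using x unfolding powr_def by simp
    moreover have "0 \<le> x powr (-1/4)" by simp
    ultimately show ?thesis by linarith
  next
    case False
    then have "exp (\<bar>ln x\<bar> / 4) = x powr (-1/4)" using x unfolding powr_def by simp
    moreover have "0 \<le> x powr (1/4)" by simp
    ultimately show ?thesis by linarith
  qed
  finally have et: "exp t \<le> x powr (1/4) + x powr (-1/4)" by simp
  have eq: "x powr w - 1 - w * ln x = exp t / 2 * y^2" unfolding xp e by (simp add: y_def)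
  have nn: "0 \<le> exp t / 2 * y^2" by simp
  have "\<bar>x powr w - 1 - w * ln x\<bar> = exp t / 2 * y^2" unfolding eq by (rule abs_of_nonneg[OF nn])
  also have "\<dots> \<le> exp t * y^2" by simp
  also have "\<dots> \<le> (x powr (1/4) + x powr (-1/4)) * y^2" using et by (intro mult_right_mono) auto
  also have "\<dots> = w^2 * RR x" unfolding RR_def y_def by (simp add: power_mult_distrib)
  finally show ?thesis .
qed

lemma good_ints:
  assumes gd: "good M h"
  shows "integrable M (\<lambda>s. ln (h s))" "integrable M (\<lambda>s. RR (h s))"
    "\<And>w. \<bar>w\<bar> \<le> 1 \<Longrightarrow> integrable M (\<lambda>s. h s powr w)"
    "integrable M (\<lambda>s. (h s)^2)"
proof -
  show "integrable M (\<lambda>s. ln (h s))"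
  proof (rule good_int[OF gd, of "\<lambda>x. ln x" 1])
    show "(\<lambda>x::real. ln x) \<in> borel_measurable borel" by measurable
  qed (use bnd_ln in simp_all)
  show "integrable M (\<lambda>s. RR (h s))"
  proof (rule good_int[OF gd, of "\<lambda>x. RR x" 32])
    show "(\<lambda>x. RR x) \<in> borel_measurable borel" unfolding RR_def by measurable
  qed (use bnd_R in simp_all)
  show "integrable M (\<lambda>s. h s powr w)" if "\<bar>w\<bar> \<le> 1" for w
  proof (rule good_int[OF gd, of _ 1])
    show "(\<lambda>x::real. x powr w) \<in> borel_measurable borel" by measurable
  qed (use bnd_powr that in simp_all)
  show "integrable M (\<lambda>s. (h s)^2)"
  proof (rule good_int[OF gd, of _ 1])
    show "(\<lambda>x::real. x^2) \<in> borel_measurable borel" by measurable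
  qed (use bnd_sq in simp_all)
qed

lemma good_deriv:
  assumes gd: "good M h"
  shows "deriv (\<lambda>w. \<integral>s. h s powr w \<partial>M) 0 = (\<integral>s. ln (h s) \<partial>M)"
proof -
  interpret prob_space M using gd unfolding good_def by blast
  have hm[measurable]: "h \<in> borel_measurable M" by (rule good_meas[OF gd])
  have pos: "AE s in M. h s > 0" by (rule good_pos[OF gd])
  note ints = good_ints[OF gd]
  define \<phi> where "\<phi> w = (\<integral>s. h s powr w \<partial>M)" for w
  define L where "L = (\<integral>s. ln (h s) \<partial>M)"
  define ER where "ER = (\<integral>s. RR (h s) \<partial>M)"
  have phi0: "\<phi> 0 = 1"
  proof -
    have "\<phi> 0 = (\<integral>s. 1 \<partial>M)"
      unfolding \<phi>_def
    proof (rule integral_cong_AE)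
      show "AE s in M. h s powr 0 = 1" using pos by eventually_elim simp
    qed measurable
    then show ?thesis by (simp add: prob_space)
  qed
  have key: "\<bar>(\<phi> w - \<phi> 0) / (w - 0) - L\<bar> \<le> \<bar>w\<bar> * ER" if w0: "w \<noteq> 0" and w: "\<bar>w\<bar> \<le> 1/4" for w
  proof -
    have iw: "integrable M (\<lambda>s. h s powr w)" using ints(3)[of w] w by simp
    have "(\<integral>s. h s powr w - 1 - w * ln (h s) \<partial>M) = (\<integral>s. h s powr w - 1 \<partial>M) - (\<integral>s. w * ln (h s) \<partial>M)"
      by (rule Bochner_Integration.integral_diff) (use iw ints(1) in auto)
    also have "(\<integral>s. h s powr w - 1 \<partial>M) = \<phi> w - 1"
      unfolding \<phi>_def by (subst Bochner_Integration.integral_diff) (use iw in \<open>auto simp: prob_space\<close>)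
    also have "(\<integral>s. w * ln (h s) \<partial>M) = w * L" unfolding L_def by simp
    finally have eq: "\<phi> w - \<phi> 0 - w * L = (\<integral>s. h s powr w - 1 - w * ln (h s) \<partial>M)" using phi0 by simp
    have "\<bar>\<phi> w - \<phi> 0 - w * L\<bar> \<le> (\<integral>s. \<bar>h s powr w - 1 - w * ln (h s)\<bar> \<partial>M)"
      unfolding eq using integral_norm_bound[of M "\<lambda>s. h s powr w - 1 - w * ln (h s)"] by simp
    also have "\<dots> \<le> (\<integral>s. w^2 * RR (h s) \<partial>M)"
    proof (rule integral_mono_AE)
      show "integrable M (\<lambda>s. \<bar>h s powr w - 1 - w * ln (h s)\<bar>)"
        using iw ints(1) by (intro integrable_abs Bochner_Integration.integrable_diff) auto
      show "integrable M (\<lambda>s. w^2 * RR (h s))" using ints(2) by simp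
      show "AE s in M. \<bar>h s powr w - 1 - w * ln (h s)\<bar> \<le> w^2 * RR (h s)"
        using pos by eventually_elim (rule taylor_powr[OF _ w])
    qed
    also have "\<dots> = w^2 * ER" unfolding ER_def by simp
    finally have b: "\<bar>\<phi> w - \<phi> 0 - w * L\<bar> \<le> w^2 * ER" .
    have "(\<phi> w - \<phi> 0) / (w - 0) - L = (\<phi> w - \<phi> 0 - w * L) / w" using w0 by (simp add: field_simps)
    then have "\<bar>(\<phi> w - \<phi> 0) / (w - 0) - L\<bar> = \<bar>\<phi> w - \<phi> 0 - w * L\<bar> / \<bar>w\<bar>" by simp
    also have "\<dots> \<le> w^2 * ER / \<bar>w\<bar>" using b w0 by (intro divide_right_mono) auto
    also have "w^2 * ER / \<bar>w\<bar> = \<bar>w\<bar> * ER"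
      using w0 by (cases "w > 0") (simp_all add: power2_eq_square)
    finally show ?thesis .
  qed
  have "((\<lambda>w. (\<phi> w - \<phi> 0) / (w - 0) - L) \<longlongrightarrow> 0) (at 0)"
  proof (rule Lim_null_comparison)
    show "eventually (\<lambda>w. norm ((\<phi> w - \<phi> 0) / (w - 0) - L) \<le> \<bar>w\<bar> * ER) (at 0)"
      unfolding eventually_at dist_real_def
    proof (intro exI[of _ "1/4"] conjI ballI impI)
      fix w :: real assume "w \<noteq> 0 \<and> \<bar>w - 0\<bar> < 1/4"
      then show "norm ((\<phi> w - \<phi> 0) / (w - 0) - L) \<le> \<bar>w\<bar> * ER" using key[of w] by simp
    qed simp
    have "((\<lambda>w. \<bar>w\<bar> * ER) \<longlongrightarrow> \<bar>0\<bar> * ER) (at (0::real))"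
      by (intro tendsto_intros)
    then show "((\<lambda>w. \<bar>w\<bar> * ER) \<longlongrightarrow> 0) (at 0)" by simp
  qed
  then have "(\<phi> has_field_derivative L) (at 0)"
    unfolding has_field_derivative_iff LIM_zero_iff .
  then have "deriv \<phi> 0 = L" by (rule DERIV_imp_deriv)
  then show ?thesis unfolding \<phi>_def[abs_def] L_def .
qed

lemma ln_tangent:
  fixes x x0 :: real
  assumes "x > -1" "x0 > -1"
  shows "ln (1 + x) \<le> ln (1 + x0) + (x - x0) / (1 + x0)"
proof -
  have "ln ((1 + x) / (1 + x0)) \<le> (1 + x) / (1 + x0) - 1"
    using assms by (intro ln_le_minus_one) simp
  moreover have "ln ((1 + x) / (1 + x0)) = ln (1 + x) - ln (1 + x0)" using assms by (simp add: ln_div)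
  moreover have "(1 + x) / (1 + x0) - 1 = (x - x0) / (1 + x0)" using assms by (simp add: field_simps)
  ultimately show ?thesis by simp
qed

lemma inv_sq_tangent:
  fixes a c :: real
  assumes a: "a > 0" and c: "c > 0"
  shows "1 / c^2 - 2 * (a - c) / c^3 \<le> 1 / a^2"
proof -
  have nn: "(c - a)^2 * (c + 2*a) \<ge> 0" using a c by simp
  have "1 / a^2 - (1 / c^2 - 2 * (a - c) / c^3) = (c - a)^2 * (c + 2*a) / (a^2 * c^3)"
    using a c by (simp add: field_simps power2_eq_square power3_eq_cube)
  also have "\<dots> \<ge> 0" using nn a c by simp
  finally show ?thesis by simp
qed

definition gg :: "real \<Rightarrow> real" where "gg x = 1 - 1 / (1 + x)^2"

lemma gg_bounds: "x \<ge> 0 \<Longrightarrow> 0 \<le> gg x \<and> gg x \<le> 1"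
  unfolding gg_def by (auto simp: field_simps)

lemma gg_tangent:
  assumes "x \<ge> 0" "x0 \<ge> 0"
  shows "gg x \<le> gg x0 + 2 * (x - x0) / (1 + x0)^3"
  using inv_sq_tangent[of "1 + x" "1 + x0"] assms unfolding gg_def by simp

lemma J_ln:
  fixes X :: "'a \<Rightarrow> real"
  assumes P: "prob_space M" and X: "integrable M X" and Xn: "\<And>s. X s \<ge> 0"
    and LX: "integrable M (\<lambda>s. ln (1 + X s))"
  shows "(\<integral>s. ln (1 + X s) \<partial>M) \<le> ln (1 + (\<integral>s. X s \<partial>M))"
proof -
  interpret prob_space M by (rule P)
  define x0 where "x0 = (\<integral>s. X s \<partial>M)"
  have x0: "x0 \<ge> 0" unfolding x0_def using Xn by (intro Bochner_Integration.integral_nonneg_AE AE_I2) auto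
  have "(\<integral>s. ln (1 + X s) \<partial>M) \<le> (\<integral>s. ln (1 + x0) + (X s - x0) / (1 + x0) \<partial>M)"
  proof (intro integral_mono LX ln_tangent)
    fix s show "X s > -1" using Xn[of s] by linarith
  qed (use X x0 Xn in \<open>auto intro!: Bochner_Integration.integrable_add Bochner_Integration.integrable_diff\<close>)
  also have "\<dots> = ln (1 + x0) + ((\<integral>s. X s \<partial>M) - x0) / (1 + x0)"
    using X by (simp add: Bochner_Integration.integral_add Bochner_Integration.integral_diff prob_space)
  also have "\<dots> = ln (1 + x0)" by (simp add: x0_def)
  finally show ?thesis unfolding x0_def .
qed

lemma J_sqrt:
  assumes P: "prob_space M" and X: "integrable M X" and Xn: "\<And>s. X s \<ge> 0"
  shows "(\<integral>s. sqrt (gg (X s)) \<partial>M) \<le> sqrt (gg (\<integral>s. X s \<partial>M))"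
proof -
  interpret prob_space M by (rule P)
  have Xm[measurable]: "X \<in> borel_measurable M" using X by auto
  have ggm[measurable]: "gg \<in> borel_measurable borel" unfolding gg_def[abs_def] by measurable
  define x0 where "x0 = (\<integral>s. X s \<partial>M)"
  have x0: "x0 \<ge> 0" unfolding x0_def using Xn by (intro Bochner_Integration.integral_nonneg_AE AE_I2) auto
  define U where "U s = gg (X s)" for s
  define V where "V s = sqrt (U s)" for s
  have Ub: "0 \<le> U s \<and> U s \<le> 1" for s unfolding U_def using gg_bounds[OF Xn] .
  have Vb: "0 \<le> V s \<and> V s \<le> 1" for s unfolding V_def using Ub[of s] by auto
  have Um[measurable]: "U \<in> borel_measurable M" unfolding U_def[abs_def] by measurable
  have Vm[measurable]: "V \<in> borel_measurable M" unfolding V_def[abs_def] by measurable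
  have UI: "integrable M U"
    by (rule integrable_const_bound[where B=1]) (use Ub in auto)
  have VI: "integrable M V"
    by (rule integrable_const_bound[where B=1]) (use Vb in auto)
  have Vc: "\<bar>V s - c\<bar> \<le> 1 + \<bar>c\<bar>" for s c
    using Vb[of s] abs_ge_self[of c] abs_ge_minus_self[of c] by (simp add: abs_le_iff)
  have VVI: "integrable M (\<lambda>s. (V s - c)^2)" for c
  proof (rule integrable_const_bound[where B="(1 + \<bar>c\<bar>)^2"])
    show "AE s in M. norm ((V s - c)^2) \<le> (1 + \<bar>c\<bar>)^2"
    proof (rule AE_I2)
      fix s
      have "norm ((V s - c)^2) = \<bar>V s - c\<bar>^2" by simp
      also have "\<dots> \<le> (1 + \<bar>c\<bar>)^2" by (rule power_mono[OF Vc]) simp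
      finally show "norm ((V s - c)^2) \<le> (1 + \<bar>c\<bar>)^2" .
    qed
  qed measurable
  define c where "c = (\<integral>s. V s \<partial>M)"
  have "0 \<le> (\<integral>s. (V s - c)^2 \<partial>M)" by (simp add: integral_nonneg)
  also have "(\<lambda>s. (V s - c)^2) = (\<lambda>s. U s - 2 * c * V s + c^2)"
    using Ub by (auto simp: V_def power2_diff)
  also have "(\<integral>s. U s - 2 * c * V s + c^2 \<partial>M) = (\<integral>s. U s \<partial>M) - 2 * c * c + c^2"
    using UI VI by (simp add: Bochner_Integration.integral_add Bochner_Integration.integral_diff prob_space c_def)
  finally have c2: "c^2 \<le> (\<integral>s. U s \<partial>M)" by (simp add: power2_eq_square)
  have "(\<integral>s. U s \<partial>M) \<le> (\<integral>s. gg x0 + 2 * (X s - x0) / (1 + x0)^3 \<partial>M)"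
    by (intro integral_mono UI) (use X x0 Xn gg_tangent in \<open>auto simp: U_def intro!: Bochner_Integration.integrable_add Bochner_Integration.integrable_diff\<close>)
  also have "\<dots> = gg x0 + 2 * ((\<integral>s. X s \<partial>M) - x0) / (1 + x0)^3"
    using X by (simp add: Bochner_Integration.integral_add Bochner_Integration.integral_diff prob_space)
  also have "\<dots> = gg x0" by (simp add: x0_def)
  finally have Ug: "(\<integral>s. U s \<partial>M) \<le> gg x0" .
  have "c \<le> sqrt (c^2)" by simp
  also have "\<dots> \<le> sqrt (gg x0)" using c2 Ug by (intro real_sqrt_le_mono) linarith
  finally show ?thesis unfolding c_def V_def U_def x0_def .
qed

lemma int_ln1:
  assumes gd: "good M h" and K: "K > 0"
  shows "integrable M (\<lambda>s. ln (1 + K * (h s)^2))"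
proof (rule good_int[OF gd, of "\<lambda>x. ln (1 + K * x^2)" K])
  show "(\<lambda>x::real. ln (1 + K * x^2)) \<in> borel_measurable borel" by measurable
  fix x :: real assume x: "x > 0"
  have u: "K * x^2 \<ge> 0" using K by simp
  have "ln (1 + K * x^2) \<le> K * x^2" using u by (intro ln_add_one_self_le_self) 
  moreover have "ln (1 + K * x^2) \<ge> 0" using u by simp
  moreover have "K * x^2 \<le> K * (1/x + x^3)" using bnd_sq[OF x] K by simp
  ultimately show "\<bar>ln (1 + K * x^2)\<bar> \<le> K * (1/x + x^3)" by simp
qed (use K in simp)

lemma J_conv:
  assumes gd: "good M h" and K: "K > 0"
  shows "ln (1 + K * exp (2 * (\<integral>s. ln (h s) \<partial>M))) \<le> (\<integral>s. ln (1 + K * (h s)^2) \<partial>M)"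
proof -
  interpret prob_space M using gd unfolding good_def by blast
  have hm[measurable]: "h \<in> borel_measurable M" by (rule good_meas[OF gd])
  have pos: "AE s in M. h s > 0" by (rule good_pos[OF gd])
  note ints = good_ints[OF gd]
  define F where "F y = ln (1 + K * exp y)" for y
  define F' where "F' y = K * exp y / (1 + K * exp y)" for y
  have Fd: "(F has_real_derivative F' y) (at y)" for y
  proof -
    have "1 + K * exp y > 0" using K by (simp add: add_pos_pos)
    then show ?thesis unfolding F_def F'_def by (auto intro!: derivative_eq_intros simp del: exp_ge_zero)
  qed
  have Fm: "F' y1 \<le> F' y2" if "y1 \<le> y2" for y1 y2
  proof -
    have a: "1 + K * exp y1 \<le> 1 + K * exp y2" using that K by simp
    have b: "0 < 1 + K * exp y1" using K by (simp add: add_pos_pos)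
    have ab: "0 < (1 + K * exp y2) * (1 + K * exp y1)" using a b by simp
    have e: "F' y = 1 - 1 / (1 + K * exp y)" for y
    proof -
      have "0 < 1 + K * exp y" using K by (simp add: add_pos_pos)
      then show ?thesis unfolding F'_def by (simp add: field_simps)
    qed
    have "1 / (1 + K * exp y2) \<le> 1 / (1 + K * exp y1)"
      by (rule divide_left_mono[OF a _ ab]) simp
    then show ?thesis unfolding e by simp
  qed
  have conv: "convex_on UNIV F"
  proof (rule convex_on_realI[where f'=F'])
    show "connected (UNIV :: real set)" by simp
    show "(F has_real_derivative F' x) (at x)" for x by (rule Fd)
    show "F' x \<le> F' y" if "x \<le> y" for x y by (rule Fm[OF that])
  qed
  define c where "c = 2 * (\<integral>s. ln (h s) \<partial>M)"
  have tan: "F x - F c \<ge> F' c * (x - c)" for x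
    using convex_on_imp_above_tangent[OF conv connected_UNIV _ _ Fd[of c]] by simp
  have "(\<integral>s. F c + F' c * (2 * ln (h s) - c) \<partial>M) \<le> (\<integral>s. ln (1 + K * (h s)^2) \<partial>M)"
  proof (rule integral_mono_AE)
    show "integrable M (\<lambda>s. F c + F' c * (2 * ln (h s) - c))"
    proof -
      have i1: "integrable M (\<lambda>s. 2 * ln (h s))" using ints(1) by simp
      have i2: "integrable M (\<lambda>s. 2 * ln (h s) - c)"
        using Bochner_Integration.integrable_diff[OF i1 integrable_const[of c]] by simp
      have i3: "integrable M (\<lambda>s. F' c * (2 * ln (h s) - c))" using i2 by simp
      show ?thesis using Bochner_Integration.integrable_add[OF integrable_const[of "F c"] i3] by simp
    qed
    show "integrable M (\<lambda>s. ln (1 + K * (h s)^2))" by (rule int_ln1[OF gd K])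
    show "AE s in M. F c + F' c * (2 * ln (h s) - c) \<le> ln (1 + K * (h s)^2)"
      using pos
    proof eventually_elim
      case (elim s)
      have "exp (2 * ln (h s)) = exp (ln (h s) + ln (h s))" by (rule arg_cong[where f=exp]) simp
      also have "\<dots> = exp (ln (h s)) * exp (ln (h s))" by (rule exp_add)
      also have "\<dots> = (h s)^2" using elim by (simp add: power2_eq_square)
      finally have "F (2 * ln (h s)) = ln (1 + K * (h s)^2)" unfolding F_def by simp
      moreover have "F (2 * ln (h s)) - F c \<ge> F' c * (2 * ln (h s) - c)" by (rule tan)
      ultimately show ?case by linarith
    qed
  qed
  also have "(\<integral>s. F c + F' c * (2 * ln (h s) - c) \<partial>M) = F c + F' c * (2 * (\<integral>s. ln (h s) \<partial>M) - c)"
  proof -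
    have i1: "integrable M (\<lambda>s. 2 * ln (h s))" using ints(1) by simp
    have "(\<integral>s. F c + F' c * (2 * ln (h s) - c) \<partial>M) = F c + (\<integral>s. F' c * (2 * ln (h s) - c) \<partial>M)"
      using i1 by (subst Bochner_Integration.integral_add) (auto simp: prob_space)
    also have "(\<integral>s. F' c * (2 * ln (h s) - c) \<partial>M) = F' c * (\<integral>s. 2 * ln (h s) - c \<partial>M)"
      by simp
    also have "(\<integral>s. 2 * ln (h s) - c \<partial>M) = (\<integral>s. 2 * ln (h s) \<partial>M) - c"
      using i1 by (subst Bochner_Integration.integral_diff) (auto simp: prob_space)
    finally show ?thesis by simp
  qed
  also have "\<dots> = F c" by (simp add: c_def)
  finally show ?thesis by (simp add: F_def c_def)
qed

lemma disp_eq: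
  assumes x: "x \<ge> 0" and n: "n \<ge> 1"
  shows "sqrt (dispersion x / real n) * Q = Q / (ln 2 * sqrt (real n)) * sqrt (gg x)"
proof -
  have p: "(1 + x)^2 > 0" using x by simp
  have "gg x = ((1 + x)^2 - 1) / (1 + x)^2"
    unfolding gg_def using p by (simp add: diff_divide_distrib)
  also have "(1 + x)^2 - 1 = x^2 + 2*x" by (simp add: power2_eq_square algebra_simps)
  finally have g: "gg x = (x^2 + 2*x) / (1 + x)^2" .
  have "dispersion x / real n = gg x / ((ln 2)^2 * real n)"
    unfolding dispersion_def g by simp
  then have "sqrt (dispersion x / real n) = sqrt (gg x) / (ln 2 * sqrt (real n))"
    by (simp add: real_sqrt_divide real_sqrt_mult)
  then show ?thesis by simp
qed

lemma bounded_int: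
  fixes f :: "'a \<Rightarrow> real"
  assumes "prob_space M" "f \<in> borel_measurable M" "\<And>s. \<bar>f s\<bar> \<le> B"
  shows "integrable M f"
proof -
  interpret prob_space M by (rule assms(1))
  show ?thesis by (rule integrable_const_bound[where B=B]) (use assms in auto)
qed

theorem theorem1:
  fixes M :: "'a measure" and hB hE :: "'a \<Rightarrow> real"
    and n :: nat and eB \<delta> KB KE bB mB \<Omega>B bE mE \<Omega>E :: real
  assumes "prob_space M"
    and "n \<ge> 1"
    and "0 < eB" "eB \<le> 1/2" "0 < \<delta>" "\<delta> \<le> 1/2"
    and "KB > 0" "KE > 0"
    and "bB > 0" "mB > 0" "\<Omega>B \<ge> 0"
    and "bE > 0" "mE > 0" "\<Omega>E \<ge> 0"
    and "distributed M lborel hB (\<lambda>x. ennreal (sr_pdf bB mB \<Omega>B x))"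
    and "distributed M lborel hE (\<lambda>x. ennreal (sr_pdf bE mE \<Omega>E x))"
  shows
    "(let SNRB = (\<lambda>s. KB * (hB s)^2); SNRE = (\<lambda>s. KE * (hE s)^2);
          Rs = (\<lambda>s. max 0 (log 2 (1 + SNRB s) - log 2 (1 + SNRE s))
                    - sqrt (dispersion (SNRB s) / real n) * Qinv eB
                    - sqrt (dispersion (SNRE s) / real n) * Qinv \<delta>);
          \<phi>B = (\<lambda>w. integral\<^sup>L M (\<lambda>s. hB s powr w));
          SNRBbar = integral\<^sup>L M SNRB;
          SNREbar = integral\<^sup>L M SNRE;
          Rt = log 2 (1 + KB * exp (2 * deriv \<phi>B 0)) - log 2 (1 + SNREbar)
               - Qinv eB / (ln 2 * sqrt (real n)) * sqrt (1 - 1 / (1 + SNRBbar)^2)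
               - Qinv \<delta> / (ln 2 * sqrt (real n)) * sqrt (1 - 1 / (1 + SNREbar)^2)
      in integral\<^sup>L M Rs \<ge> Rt)"
proof -
  interpret prob_space M by (rule assms(1))
  have gB: "good M hB" by (rule sr_good[OF assms(1) assms(9-11) assms(15)])
  have gE: "good M hE" by (rule sr_good[OF assms(1) assms(12-14) assms(16)])
  have hBm[measurable]: "hB \<in> borel_measurable M" by (rule good_meas[OF gB])
  have hEm[measurable]: "hE \<in> borel_measurable M" by (rule good_meas[OF gE])
  have ggm[measurable]: "gg \<in> borel_measurable borel" unfolding gg_def[abs_def] by measurable
  define SB where "SB s = KB * (hB s)^2" for s
  define SE where "SE s = KE * (hE s)^2" for s
  have SBm[measurable]: "SB \<in> borel_measurable M" unfolding SB_def[abs_def] by measurable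
  have SEm[measurable]: "SE \<in> borel_measurable M" unfolding SE_def[abs_def] by measurable
  have SBn: "SB s \<ge> 0" for s using assms(7) by (simp add: SB_def)
  have SEn: "SE s \<ge> 0" for s using assms(8) by (simp add: SE_def)
  have iSB: "integrable M SB" unfolding SB_def[abs_def] using good_ints(4)[OF gB] by simp
  have iSE: "integrable M SE" unfolding SE_def[abs_def] using good_ints(4)[OF gE] by simp
  have iLB: "integrable M (\<lambda>s. ln (1 + SB s))" unfolding SB_def by (rule int_ln1[OF gB assms(7)])
  have iLE: "integrable M (\<lambda>s. ln (1 + SE s))" unfolding SE_def by (rule int_ln1[OF gE assms(8)])
  have QB: "Qinv eB \<ge> 0" by (rule Qinv_nonneg[OF assms(3,4)])
  have QE: "Qinv \<delta> \<ge> 0" by (rule Qinv_nonneg[OF assms(5,6)])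
  define qB where "qB = Qinv eB / (ln 2 * sqrt (real n))"
  define qE where "qE = Qinv \<delta> / (ln 2 * sqrt (real n))"
  have qB: "qB \<ge> 0" using QB by (simp add: qB_def)
  have qE: "qE \<ge> 0" using QE by (simp add: qE_def)
  have iVB: "integrable M (\<lambda>s. sqrt (gg (SB s)))"
    by (rule bounded_int[OF assms(1), where B=1]) (use gg_bounds[OF SBn] in auto)
  have iVE: "integrable M (\<lambda>s. sqrt (gg (SE s)))"
    by (rule bounded_int[OF assms(1), where B=1]) (use gg_bounds[OF SEn] in auto)
  define A where "A s = log 2 (1 + SB s) - log 2 (1 + SE s)" for s
  have iA: "integrable M A"
    unfolding A_def log_def using iLB iLE by (intro Bochner_Integration.integrable_diff) auto
  define Rs where "Rs s = max 0 (A s) - qB * sqrt (gg (SB s)) - qE * sqrt (gg (SE s))" for s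
  have Rs_eq: "Rs s = max 0 (log 2 (1 + SB s) - log 2 (1 + SE s))
                    - sqrt (dispersion (SB s) / real n) * Qinv eB
                    - sqrt (dispersion (SE s) / real n) * Qinv \<delta>" for s
    unfolding Rs_def A_def qB_def qE_def using disp_eq[OF SBn assms(2)] disp_eq[OF SEn assms(2)] by simp
  have iR1: "integrable M (\<lambda>s. A s - qB * sqrt (gg (SB s)) - qE * sqrt (gg (SE s)))"
    using iA iVB iVE by (intro Bochner_Integration.integrable_diff integrable_mult_right) auto
  have iRs: "integrable M Rs"
    unfolding Rs_def using iA iVB iVE
    by (intro Bochner_Integration.integrable_diff integrable_mult_right integrable_max) auto
  define L where "L = (\<integral>s. ln (hB s) \<partial>M)"
  have dL: "deriv (\<lambda>w. \<integral>s. hB s powr w \<partial>M) 0 = L" unfolding L_def by (rule good_deriv[OF gB])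
  have "(\<integral>s. A s - qB * sqrt (gg (SB s)) - qE * sqrt (gg (SE s)) \<partial>M) \<le> (\<integral>s. Rs s \<partial>M)"
    by (rule integral_mono[OF iR1 iRs]) (simp add: Rs_def)
  moreover have "(\<integral>s. A s - qB * sqrt (gg (SB s)) - qE * sqrt (gg (SE s)) \<partial>M)
      = (\<integral>s. ln (1 + SB s) \<partial>M) / ln 2 - (\<integral>s. ln (1 + SE s) \<partial>M) / ln 2
        - qB * (\<integral>s. sqrt (gg (SB s)) \<partial>M) - qE * (\<integral>s. sqrt (gg (SE s)) \<partial>M)"
  proof -
    have "(\<integral>s. A s - qB * sqrt (gg (SB s)) - qE * sqrt (gg (SE s)) \<partial>M)
        = (\<integral>s. A s \<partial>M) - qB * (\<integral>s. sqrt (gg (SB s)) \<partial>M) - qE * (\<integral>s. sqrt (gg (SE s)) \<partial>M)"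
      using iA iVB iVE by (simp add: Bochner_Integration.integral_diff Bochner_Integration.integrable_diff)
    moreover have "(\<integral>s. A s \<partial>M) = (\<integral>s. ln (1 + SB s) \<partial>M) / ln 2 - (\<integral>s. ln (1 + SE s) \<partial>M) / ln 2"
      unfolding A_def log_def using iLB iLE by (simp add: Bochner_Integration.integral_diff)
    ultimately show ?thesis by simp
  qed
  moreover have "ln (1 + KB * exp (2 * L)) \<le> (\<integral>s. ln (1 + SB s) \<partial>M)"
    unfolding L_def SB_def by (rule J_conv[OF gB assms(7)])
  moreover have "(\<integral>s. ln (1 + SE s) \<partial>M) \<le> ln (1 + (\<integral>s. SE s \<partial>M))"
    by (rule J_ln[OF assms(1) iSE SEn iLE])
  moreover have "(\<integral>s. sqrt (gg (SB s)) \<partial>M) \<le> sqrt (gg (\<integral>s. SB s \<partial>M))"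
    by (rule J_sqrt[OF assms(1) iSB SBn])
  moreover have "(\<integral>s. sqrt (gg (SE s)) \<partial>M) \<le> sqrt (gg (\<integral>s. SE s \<partial>M))"
    by (rule J_sqrt[OF assms(1) iSE SEn])
  ultimately have main: "ln (1 + KB * exp (2 * L)) / ln 2 - ln (1 + (\<integral>s. SE s \<partial>M)) / ln 2
      - qB * sqrt (gg (\<integral>s. SB s \<partial>M)) - qE * sqrt (gg (\<integral>s. SE s \<partial>M)) \<le> (\<integral>s. Rs s \<partial>M)"
  proof -
    assume a1: "(\<integral>s. A s - qB * sqrt (gg (SB s)) - qE * sqrt (gg (SE s)) \<partial>M) \<le> (\<integral>s. Rs s \<partial>M)"
      and a2: "(\<integral>s. A s - qB * sqrt (gg (SB s)) - qE * sqrt (gg (SE s)) \<partial>M)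
      = (\<integral>s. ln (1 + SB s) \<partial>M) / ln 2 - (\<integral>s. ln (1 + SE s) \<partial>M) / ln 2
        - qB * (\<integral>s. sqrt (gg (SB s)) \<partial>M) - qE * (\<integral>s. sqrt (gg (SE s)) \<partial>M)"
      and a3: "ln (1 + KB * exp (2 * L)) \<le> (\<integral>s. ln (1 + SB s) \<partial>M)"
      and a4: "(\<integral>s. ln (1 + SE s) \<partial>M) \<le> ln (1 + (\<integral>s. SE s \<partial>M))"
      and a5: "(\<integral>s. sqrt (gg (SB s)) \<partial>M) \<le> sqrt (gg (\<integral>s. SB s \<partial>M))"
      and a6: "(\<integral>s. sqrt (gg (SE s)) \<partial>M) \<le> sqrt (gg (\<integral>s. SE s \<partial>M))"
    have l2: "ln 2 > (0::real)" by simp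
    have b3: "ln (1 + KB * exp (2 * L)) / ln 2 \<le> (\<integral>s. ln (1 + SB s) \<partial>M) / ln 2"
      using a3 l2 by (intro divide_right_mono) auto
    have b4: "(\<integral>s. ln (1 + SE s) \<partial>M) / ln 2 \<le> ln (1 + (\<integral>s. SE s \<partial>M)) / ln 2"
      using a4 l2 by (intro divide_right_mono) auto
    have b5: "qB * (\<integral>s. sqrt (gg (SB s)) \<partial>M) \<le> qB * sqrt (gg (\<integral>s. SB s \<partial>M))"
      using a5 qB by (rule mult_left_mono)
    have b6: "qE * (\<integral>s. sqrt (gg (SE s)) \<partial>M) \<le> qE * sqrt (gg (\<integral>s. SE s \<partial>M))"
      using a6 qE by (rule mult_left_mono)
    show ?thesis using a1 a2 b3 b4 b5 b6 by linarith
  qed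
  have Rs_fun: "(\<lambda>s. max 0 (log 2 (1 + SB s) - log 2 (1 + SE s))
                    - sqrt (dispersion (SB s) / real n) * Qinv eB
                    - sqrt (dispersion (SE s) / real n) * Qinv \<delta>) = Rs"
    using Rs_eq by auto
  have SB_fun: "(\<lambda>s. KB * (hB s)^2) = SB" by (auto simp: SB_def)
  have SE_fun: "(\<lambda>s. KE * (hE s)^2) = SE" by (auto simp: SE_def)
  show ?thesis
    unfolding Let_def SB_fun SE_fun dL
    unfolding Rs_fun
    using main by (simp add: log_def qB_def qE_def gg_def)
qed

end
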